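(* Consider the discrete first-price auction in the model with ties with $n=2$ bidders whose values are drawn independently and uniformly from $X=\{0,1,\dots,x\}$, where $x$ is odd. Then $\beta(v)=\lfloor v/2\rfloor$ is a symmetric equilibrium.
   Context: Model. Two risk-neutral bidders compete for one indivisible object. Values and bids lie in $X=\{0,1,2,\dots,x\}$; each bidder's value is drawn independently and uniformly from $X$. A (pure) strategy is a bidding function $\beta:X\to X$. In the model with ties, the higher bidder wins and, if the two bids are equal, each wins with probability $1/2$. In the first-price auction, a bidder with value $v_i$ bidding $b_i$ gets expected payoff $(v_i-b_i)\Pr(i\text{ wins})$. An equilibrium is a profile of bidding functions such that each bidder's bidding function maximises their expected payoff given the other's (a pure-strategy Bayes–Nash equilibrium) and such that no bidder uses a weakly dominated bidding function (a bidding function is weakly dominated if some other bidding function yields at least as high expected payoff against every opponent bidding function, and strictly higher against some). A symmetric equilibrium is an equilibrium in which both bidders use the same bidding function. *)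

theory Defs
  imports Main "HOL.Real"
begin

text \<open>A bidding function is a map beta : X -> X (represented as nat => nat
  with values on {0..x} lying in {0..x}; values outside X are irrelevant).\<close>

definition bidding_function :: "nat \<Rightarrow> (nat \<Rightarrow> nat) \<Rightarrow> bool" where
  "bidding_function x \<beta> \<longleftrightarrow> (\<forall>v\<in>{0..x}. \<beta> v \<in> {0..x})"

text \<open>Probability that a bid b wins against an opponent using bidding function
  \<beta>o, whose value is uniform on {0..x}; ties are broken by a fair coin.\<close>
definition win_prob :: "nat \<Rightarrow> nat \<Rightarrow> (nat \<Rightarrow> nat) \<Rightarrow> real" where
  "win_prob x b \<beta>o =
     (\<Sum>w\<in>{0..x}. (if \<beta>o w < b then 1 else if \<beta>o w = b then 1/2 else 0)) / real (x + 1)"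

definition interim_payoff :: "nat \<Rightarrow> nat \<Rightarrow> nat \<Rightarrow> (nat \<Rightarrow> nat) \<Rightarrow> real" where
  "interim_payoff x v b \<beta>o = (real v - real b) * win_prob x b \<beta>o"

definition exp_payoff :: "nat \<Rightarrow> (nat \<Rightarrow> nat) \<Rightarrow> (nat \<Rightarrow> nat) \<Rightarrow> real" where
  "exp_payoff x \<beta> \<beta>o = (\<Sum>v\<in>{0..x}. interim_payoff x v (\<beta> v) \<beta>o) / real (x + 1)"

definition best_response :: "nat \<Rightarrow> (nat \<Rightarrow> nat) \<Rightarrow> (nat \<Rightarrow> nat) \<Rightarrow> bool" where
  "best_response x \<beta> \<beta>o \<longleftrightarrow>
     (\<forall>\<beta>'. bidding_function x \<beta>' \<longrightarrow> exp_payoff x \<beta>' \<beta>o \<le> exp_payoff x \<beta> \<beta>o)"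

definition weakly_dominated :: "nat \<Rightarrow> (nat \<Rightarrow> nat) \<Rightarrow> bool" where
  "weakly_dominated x \<beta> \<longleftrightarrow>
     (\<exists>\<beta>'. bidding_function x \<beta>' \<and>
        (\<forall>\<beta>o. bidding_function x \<beta>o \<longrightarrow> exp_payoff x \<beta> \<beta>o \<le> exp_payoff x \<beta>' \<beta>o) \<and>
        (\<exists>\<beta>o. bidding_function x \<beta>o \<and> exp_payoff x \<beta> \<beta>o < exp_payoff x \<beta>' \<beta>o))"

definition equilibrium :: "nat \<Rightarrow> (nat \<Rightarrow> nat) \<Rightarrow> (nat \<Rightarrow> nat) \<Rightarrow> bool" where
  "equilibrium x \<beta>1 \<beta>2 \<longleftrightarrow>
     bidding_function x \<beta>1 \<and> bidding_function x \<beta>2 \<and>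
     best_response x \<beta>1 \<beta>2 \<and> best_response x \<beta>2 \<beta>1 \<and>
     \<not> weakly_dominated x \<beta>1 \<and> \<not> weakly_dominated x \<beta>2"

definition symmetric_equilibrium :: "nat \<Rightarrow> (nat \<Rightarrow> nat) \<Rightarrow> bool" where
  "symmetric_equilibrium x \<beta> \<longleftrightarrow> equilibrium x \<beta> \<beta>"

end

theory Submission
  imports Defs
begin

definition NN :: "nat \<Rightarrow> nat \<Rightarrow> real" where
  "NN m b = (if b \<le> m then 2 * real b + 1 else 2 * real m + 2)"

definition gg :: "nat \<Rightarrow> nat \<Rightarrow> real" where
  "gg b w = (if w div 2 < b then 1 else if w div 2 = b then 1/2 else 0)"

lemma sum_NN0: "sum (gg b) {0..2*m+1} = NN m b"
proof (induction m)
  case 0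
  have "{0..2*0+1::nat} = {0,1}" by auto
  then show ?case by (simp add: NN_def gg_def)
next
  case (Suc m)
  have e: "{0..2*Suc m+1} = insert (2*m+3) (insert (2*m+2) {0..2*m+1})" by auto
  have d1: "(2*m+3) div 2 = Suc m" "(2*m+2) div 2 = Suc m" by auto
  have "sum (gg b) {0..2*Suc m+1} = gg b (2*m+3) + (gg b (2*m+2) + sum (gg b) {0..2*m+1})"
    unfolding e by (subst sum.insert, simp, simp, subst sum.insert, auto)
  also have "\<dots> = NN (Suc m) b"
    unfolding Suc gg_def d1 NN_def by auto
  finally show ?case .
qed

lemma sum_NN:
  "(\<Sum>w\<in>{0..2*m+1}. (if (w::nat) div 2 < b then 1 else if w div 2 = b then 1/2 else (0::real))) = NN m b"
  using sum_NN0[of b m] unfolding gg_def by simp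

lemma win_prob_eq:
  assumes "x = 2*m+1"
  shows "win_prob x b (\<lambda>v. v div 2) = NN m b / (2 * real m + 2)"
proof -
  have "win_prob x b (\<lambda>v. v div 2) = sum (gg b) {0..x} / real (x+1)"
    by (simp add: win_prob_def gg_def)
  also have "\<dots> = NN m b / (2 * real m + 2)"
    unfolding assms sum_NN0 by simp
  finally show ?thesis .
qed

lemma dpos: "(d::int) \<noteq> 0 \<Longrightarrow> 0 < d * (2*d - 1) \<and> 0 < d * (2*d+1)"
proof -
  assume "d \<noteq> 0"
  then consider "d \<ge> 1" | "d \<le> -1" by linarith
  then show ?thesis
  proof cases
    case 1 then show ?thesis by (simp add: mult_pos_pos)
  next
    case 2 then show ?thesis by (simp add: mult_neg_neg)
  qed
qed

lemma key_le:
  assumes "b \<le> m" "b \<noteq> v div 2"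
  shows "(real v - real b) * (2 * real b + 1) < (real v - real (v div 2)) * (2 * real (v div 2) + 1)"
proof -
  define k where "k = v div 2"
  define d where "d = int k - int b"
  have dn: "d \<noteq> 0" using assms k_def d_def by auto
  have idn: "(real v - real k) * (2 * real k + 1) - (real v - real b) * (2 * real b + 1)
      = (real k - real b) * (2 * real v - 2 * real k - 2 * real b - 1)"
    by (simp add: algebra_simps)
  have "v = 2*k \<or> v = 2*k+1" using k_def by auto
  then have "0 < (real k - real b) * (2 * real v - 2 * real k - 2 * real b - 1)"
  proof
    assume v: "v = 2*k"
    have "real_of_int (d * (2*d - 1)) = (real k - real b) * (2 * real v - 2 * real k - 2 * real b - 1)"
      by (simp add: d_def v algebra_simps)
    moreover have "0 < real_of_int (d * (2*d - 1))" using dpos[OF dn] of_int_0_less_iff by blast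
    ultimately show ?thesis by simp
  next
    assume v: "v = 2*k+1"
    have "real_of_int (d * (2*d + 1)) = (real k - real b) * (2 * real v - 2 * real k - 2 * real b - 1)"
      by (simp add: d_def v algebra_simps)
    moreover have "0 < real_of_int (d * (2*d + 1))" using dpos[OF dn] of_int_0_less_iff by blast
    ultimately show ?thesis by simp
  qed
  then show ?thesis using idn k_def by simp
qed

lemma key_num:
  assumes "v \<le> 2*m+1" "b \<noteq> v div 2"
  shows "(real v - real b) * NN m b < (real v - real (v div 2)) * NN m (v div 2)"
proof (cases "b \<le> m")
  case True
  have "v div 2 \<le> m" using assms by auto
  then show ?thesis using key_le[OF True assms(2)] True by (simp add: NN_def)
next
  case False
  have km: "v div 2 \<le> m" using assms by auto
  have "(real v - real b) * (2 * real m + 2) \<le> (real v - real m - 1) * (2 * real m + 2)"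
    using False by (intro mult_right_mono) auto
  also have "\<dots> < (real v - real m) * (2 * real m + 1)"
    using assms(1) by (simp add: algebra_simps)
  also have "\<dots> \<le> (real v - real (v div 2)) * (2 * real (v div 2) + 1)"
  proof (cases "m = v div 2")
    case True then show ?thesis by simp
  next
    case False
    then show ?thesis using key_le[of m m v] by simp
  qed
  finally show ?thesis using False km by (simp add: NN_def)
qed

lemma key_interim:
  assumes "x = 2*m+1" "v \<le> x" "b \<noteq> v div 2"
  shows "interim_payoff x v b (\<lambda>v. v div 2) < interim_payoff x v (v div 2) (\<lambda>v. v div 2)"
proof -
  have p: "0 < 2 * real m + 2" by simp
  show ?thesis
    unfolding interim_payoff_def win_prob_eq[OF assms(1)]
    using divide_strict_right_mono[OF key_num[of v m b] p] assms
    by (simp only: times_divide_eq_right) (metis assms(1,2,3))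
qed

lemma key_interim_le:
  assumes "x = 2*m+1" "v \<le> x"
  shows "interim_payoff x v b (\<lambda>v. v div 2) \<le> interim_payoff x v (v div 2) (\<lambda>v. v div 2)"
  using key_interim[OF assms, of b] by (cases "b = v div 2") auto

theorem proposition6:
  fixes x :: nat
  assumes "odd x"
  shows "symmetric_equilibrium x (\<lambda>v. v div 2)"
proof -
  obtain m where xm: "x = 2*m+1" using assms oddE by blast
  let ?b = "\<lambda>v::nat. v div 2"
  have bf: "bidding_function x ?b" by (auto simp: bidding_function_def)
  have br: "best_response x ?b ?b"
    unfolding best_response_def exp_payoff_def
  proof (intro allI impI divide_right_mono sum_mono)
    fix \<beta>' v assume "v \<in> {0..x}"
    then show "interim_payoff x v (\<beta>' v) ?b \<le> interim_payoff x v (v div 2) ?b"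
      using key_interim_le[OF xm] by auto
  qed simp
  have nd: "\<not> weakly_dominated x ?b"
  proof
    assume "weakly_dominated x ?b"
    then obtain \<beta>' where b': "bidding_function x \<beta>'"
      and all: "\<forall>\<beta>o. bidding_function x \<beta>o \<longrightarrow> exp_payoff x ?b \<beta>o \<le> exp_payoff x \<beta>' \<beta>o"
      and ex: "\<exists>\<beta>o. bidding_function x \<beta>o \<and> exp_payoff x ?b \<beta>o < exp_payoff x \<beta>' \<beta>o"
      unfolding weakly_dominated_def by blast
    show False
    proof (cases "\<exists>v\<in>{0..x}. \<beta>' v \<noteq> v div 2")
      case True
      have "(\<Sum>v\<in>{0..x}. interim_payoff x v (\<beta>' v) ?b) < (\<Sum>v\<in>{0..x}. interim_payoff x v (v div 2) ?b)"
      proof (rule sum_strict_mono_ex1)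
        show "finite {0..x}" by simp
        show "\<forall>v\<in>{0..x}. interim_payoff x v (\<beta>' v) ?b \<le> interim_payoff x v (v div 2) ?b"
          using key_interim_le[OF xm] by simp
        from True obtain v where v: "v \<in> {0..x}" "\<beta>' v \<noteq> v div 2" by blast
        have "interim_payoff x v (\<beta>' v) ?b < interim_payoff x v (v div 2) ?b"
          using key_interim[OF xm _ v(2)] v(1) by simp
        then show "\<exists>v\<in>{0..x}. interim_payoff x v (\<beta>' v) ?b < interim_payoff x v (v div 2) ?b"
          using v(1) by blast
      qed
      then have "exp_payoff x \<beta>' ?b < exp_payoff x ?b ?b"
        unfolding exp_payoff_def by (simp add: divide_strict_right_mono)
      then show False using all bf by force
    next
      case False
      then have "\<And>\<beta>o. exp_payoff x \<beta>' \<beta>o = exp_payoff x ?b \<beta>o"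
        unfolding exp_payoff_def by (intro arg_cong2[where f="(/)"] sum.cong) auto
      then show False using ex by auto
    qed
  qed
  show ?thesis unfolding symmetric_equilibrium_def equilibrium_def
    using bf br nd by blast
qed

end
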